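(* Let $n>k\geq3$ be odd integers, let $A$ be a cyclically $k$-diagonal $n\times n$ array and let $g=\gcd(n,k-1)$. If $\gcd(g+1,k-1)=2$, then there exists a solution to $P(A)$.
   Context: Arrays are partially filled and toroidal; $F(A)$ is the set of filled cells. $s_R(i,j)=(i,j+t)$, $s_C(i,j)=(i+t,j)$ with $t\ge1$ minimal such that the cell is filled. For $R\in\{-1,1\}^n$, $C\in\{-1,1\}^n$, $CN_{RC}(i,j)=s_C^{c_{j'}}(i,j')$ where $(i,j')=s_R^{r_i}(i,j)$. A solution to $P(A)$ is a pair $R,C$ such that $CN_{RC}$ is a permutation of $F(A)$ forming a single cycle of length $|F(A)|$. An $n\times n$ array is cyclically $k$-diagonal if its filled cells are exactly the $(i,j)$ with $i-j\bmod n\in\{0,\dots,k-1\}$. *)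

theory Defs
  imports Main
begin

text \<open>An n x n toroidal partially filled array is represented by its set of filled
cells F, a subset of {0..<n} x {0..<n} (coordinates as integers, taken mod n).\<close>

text \<open>For d = 1 this is s_R (next filled cell to the
right, cyclically); for d = -1 it is the previous filled cell to the left, which on
filled cells is exactly the inverse permutation s_R^(-1).\<close>
definition sR :: "nat \<Rightarrow> (int \<times> int) set \<Rightarrow> int \<Rightarrow> int \<times> int \<Rightarrow> int \<times> int" where
  "sR n F d = (\<lambda>(i, j). (i, (j + d * int (LEAST t::nat. t \<ge> 1 \<and>
        (i, (j + d * int t) mod int n) \<in> F)) mod int n))"

definition sC :: "nat \<Rightarrow> (int \<times> int) set \<Rightarrow> int \<Rightarrow> int \<times> int \<Rightarrow> int \<times> int" where
  "sC n F d = (\<lambda>(i, j). ((i + d * int (LEAST t::nat. t \<ge> 1 \<and>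
        ((i + d * int t) mod int n, j) \<in> F)) mod int n, j))"

definition CN :: "nat \<Rightarrow> (int \<times> int) set \<Rightarrow> (int \<Rightarrow> int) \<Rightarrow> (int \<Rightarrow> int)
                   \<Rightarrow> int \<times> int \<Rightarrow> int \<times> int" where
  "CN n F R C = (\<lambda>(i, j). (case sR n F (R i) (i, j) of (i', j') \<Rightarrow> sC n F (C j') (i', j')))"

definition is_solution :: "nat \<Rightarrow> (int \<times> int) set \<Rightarrow> (int \<Rightarrow> int) \<Rightarrow> (int \<Rightarrow> int) \<Rightarrow> bool" where
  "is_solution n F R C \<longleftrightarrow>
     (\<forall>i\<in>{0..<int n}. R i \<in> {-1, 1}) \<and> (\<forall>j\<in>{0..<int n}. C j \<in> {-1, 1}) \<and>
     bij_betw (CN n F R C) F F \<and>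
     (\<forall>x\<in>F. \<forall>y\<in>F. \<exists>m::nat. (CN n F R C ^^ m) x = y)"

definition cyc_diag :: "nat \<Rightarrow> nat \<Rightarrow> (int \<times> int) set" where
  "cyc_diag n k = {(i, j). 0 \<le> i \<and> i < int n \<and> 0 \<le> j \<and> j < int n \<and>
                           (i - j) mod int n \<in> {0..<int k}}"

end

theory Submission imports Defs begin

lemma mod_shift: fixes x N q :: int assumes "0 \<le> x + q*N" "x + q*N < N" shows "x mod N = x + q*N"
  by (metis assms mod_mult_self1 mod_pos_pos_trivial)

lemma least_minus:
  fixes e K N :: int
  assumes "0 \<le> e" "e < K" "K < N" "1 \<le> K"
  shows "(LEAST t::nat. 1 \<le> t \<and> (e - int t) mod N < K) = (if 1 \<le> e then 1 else nat (N - K + 1))"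
proof (cases "1 \<le> e")
  case True
  have "(e - 1) mod N = e - 1" using assms True by (intro mod_pos_pos_trivial) auto
  then have "(LEAST t::nat. 1 \<le> t \<and> (e - int t) mod N < K) = 1"
    using assms by (intro Least_equality) auto
  then show ?thesis using True by simp
next
  case False
  then have e0: "e = 0" using assms by simp
  have a: "(e - int (nat (N - K + 1))) mod N < K"
  proof -
    have "(e - (N - K + 1)) mod N = (e - (N - K + 1)) + 1*N"
      using assms e0 by (intro mod_shift) auto
    moreover have "int (nat (N - K + 1)) = N - K + 1" using assms by simp
    ultimately show ?thesis using e0 assms by simp
  qed
  have b: "nat (N - K + 1) \<le> t" if "1 \<le> t" "(e - int t) mod N < K" for t
  proof (rule ccontr)
    assume "\<not> ?thesis"
    then have "int t \<le> N - K" by linarith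
    then have "(e - int t) mod N = (e - int t) + 1*N"
      using that assms e0 by (intro mod_shift) auto
    then show False using that \<open>int t \<le> N - K\<close> e0 by linarith
  qed
  have "(LEAST t::nat. 1 \<le> t \<and> (e - int t) mod N < K) = nat (N - K + 1)"
    apply (rule Least_equality)
    using a assms apply auto[1]
    using b by blast
  then show ?thesis using False by simp
qed

lemma least_plus:
  fixes e K N :: int
  assumes "0 \<le> e" "e < K" "K < N" "2 \<le> K"
  shows "(LEAST t::nat. 1 \<le> t \<and> (e + int t) mod N < K) = (if e \<le> K - 2 then 1 else nat (N - K + 1))"
proof (cases "e \<le> K - 2")
  case True
  have "(e + 1) mod N = e + 1" using assms True by (intro mod_pos_pos_trivial) auto
  then have "(LEAST t::nat. 1 \<le> t \<and> (e + int t) mod N < K) = 1"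
    using assms True by (intro Least_equality) auto
  then show ?thesis using True by simp
next
  case False
  then have e0: "e = K - 1" using assms by simp
  have a: "(e + int (nat (N - K + 1))) mod N < K"
  proof -
    have "(e + (N - K + 1)) mod N = (e + (N - K + 1)) + (-1)*N"
      using assms e0 by (intro mod_shift) auto
    moreover have "int (nat (N - K + 1)) = N - K + 1" using assms by simp
    ultimately show ?thesis using e0 assms by simp
  qed
  have b: "nat (N - K + 1) \<le> t" if "1 \<le> t" "(e + int t) mod N < K" for t
  proof (rule ccontr)
    assume "\<not> ?thesis"
    then have "int t \<le> N - K" by linarith
    then have "(e + int t) mod N = (e + int t) + 0*N"
      using that assms e0 by (intro mod_shift) auto
    then show False using that \<open>int t \<le> N - K\<close> e0 by linarith
  qed
  have "(LEAST t::nat. 1 \<le> t \<and> (e + int t) mod N < K) = nat (N - K + 1)"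
    apply (rule Least_equality)
    using a assms apply auto[1]
    using b by blast
  then show ?thesis using False by simp
qed


lemma nat_mult_aux: "0 \<le> e \<Longrightarrow> int (nat e * (q + 1)) = e * (int q + 1)"
  by (simp add: distrib_left)

lemma nat_mult_aux2: "k = 2 * q + 1 \<Longrightarrow> (e::int) - 2 * (e * (int q + 1)) = (- e) * int k"
  by (simp add: algebra_simps)
lemma nat_mult_aux3: "((- e) * (K::int)) mod K = 0" by simp

lemma par_mod: assumes "even (M::int)" shows "even (a mod M) \<longleftrightarrow> even a"
proof -
  have e: "a mod M = a - a div M * M" by (simp add: minus_div_mult_eq_mod)
  have "even (a div M * M)" using assms by simp
  then show ?thesis unfolding e by simp
qed

lemma solveM: fixes u v D M b c :: int
  assumes "u * D + v * M = 2" "0 \<le> c" "c < M" "2 dvd (c - b)" "0 < M"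
  shows "\<exists>j::nat. 1 \<le> j \<and> (b + int j * D) mod M = c"
proof -
  obtain d where d: "c - b = 2 * d" using assms(4) by blast
  define q where "q = (u * d) div M"
  define r where "r = (u * d) mod M"
  have "q * M + r = u * d" unfolding q_def r_def by (rule div_mult_mod_eq)
  then have req: "r = u * d - q * M" by linarith
  have rpos: "0 \<le> r" unfolding r_def using assms by simp
  define j where "j = nat r + nat M"
  have ji: "int j = r + M" unfolding j_def using rpos assms by simp
  define W where "W = - d * v + (1 - q) * D"
  have key: "b + int j * D = c + W * M" unfolding ji W_def using req assms(1) d by algebra
  have "(b + int j * D) mod M = c" unfolding key using assms by simp
  moreover have "1 \<le> j" unfolding j_def using assms by simp
  ultimately show ?thesis by blast
qed

locale cd =
  fixes n k :: nat
  assumes k3: "3 \<le> k" and kn: "k < n" and oddk: "odd k" and oddn: "odd n"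
    and gc: "gcd (gcd n (k - 1) + 1) (k - 1) = 2"
begin

abbreviation N where "N \<equiv> int n"
abbreviation K where "K \<equiv> int k"
definition g :: nat where "g = gcd n (k - 1)"
abbreviation G where "G \<equiv> int g"
abbreviation F where "F \<equiv> cyc_diag n k"
definition Cf :: "int \<Rightarrow> int" where "Cf j = (if 0 \<le> j \<and> j \<le> G then -1 else 1)"
definition T where "T = CN n F (\<lambda>_. 1) Cf"
definition cell :: "int \<Rightarrow> int \<Rightarrow> int \<times> int" where "cell j e = ((j + e) mod N, j)"

lemma K3: "3 \<le> K" using k3 by simp
lemma KN: "K < N" using kn by simp

lemma g_dvd_n: "g dvd n" unfolding g_def by simp
lemma g_dvd_k: "g dvd (k - 1)" unfolding g_def by simp
lemma g_odd: "odd g" using g_dvd_n oddn dvd_trans by blast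
lemma g_pos: "1 \<le> g" using g_odd by (cases g) auto
lemma g_small: "2 * g \<le> k - 1"
proof -
  obtain a where a: "k - 1 = g * a" using g_dvd_k by blast
  have "even (k - 1)" using oddk k3 by simp
  then have "even (g * a)" unfolding a .
  then have "even a" using g_odd by simp
  moreover have "a \<noteq> 0"
  proof
    assume "a = 0" then have "k - 1 = 0" using a by simp
    then show False using k3 by simp
  qed
  ultimately have "2 \<le> a" by presburger
  then show ?thesis using a by (metis mult.commute mult_le_mono2)
qed
lemma G_facts: "1 \<le> G" "2 * G \<le> K - 1" "G + 1 < N" "odd G"
  using g_pos g_small k3 kn g_odd by auto

lemma memF: "(i, j) \<in> F \<longleftrightarrow> 0 \<le> i \<and> i < N \<and> 0 \<le> j \<and> j < N \<and> (i - j) mod N < K"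
  unfolding cyc_diag_def using kn by auto

lemma cell_in_F: assumes "0 \<le> j" "j < N" "0 \<le> e" "e < K" shows "cell j e \<in> F"
proof -
  have "((j + e) mod N - j) mod N = e mod N" by (simp add: mod_diff_left_eq)
  also have "\<dots> = e" using assms KN by simp
  finally show ?thesis unfolding cell_def memF using assms KN by simp
qed

lemma F_cell: assumes "x \<in> F" shows "x = cell (snd x) ((fst x - snd x) mod N)"
  "0 \<le> snd x" "snd x < N" "0 \<le> (fst x - snd x) mod N" "(fst x - snd x) mod N < K"
proof -
  obtain i j where x: "x = (i, j)" by force
  then have h: "0 \<le> i" "i < N" "0 \<le> j" "j < N" "(i - j) mod N < K" using assms memF by auto
  have "(j + (i - j) mod N) mod N = i" using h by (simp add: mod_add_right_eq)
  then show "x = cell (snd x) ((fst x - snd x) mod N)" unfolding cell_def x by simp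
  show "0 \<le> snd x" "snd x < N" "0 \<le> (fst x - snd x) mod N" "(fst x - snd x) mod N < K"
    using h x by auto
qed

lemma cell_eqI: assumes "(j1 + e1) mod N = (j + e) mod N" shows "((j + e) mod N, j1) = cell j1 e1"
  using assms unfolding cell_def by simp

lemma sR_cell: assumes "0 \<le> j" "j < N" "0 \<le> e" "e < K"
  shows "sR n F 1 (cell j e) = (if 1 \<le> e then cell ((j+1) mod N) (e-1) else cell ((j+N-K+1) mod N) (K-1))"
proof -
  have m: "((j + e) mod N, (j + int t) mod N) \<in> F \<longleftrightarrow> (e - int t) mod N < K" for t
  proof -
    have "((j + e) mod N - (j + int t) mod N) mod N = (e - int t) mod N"
      by (simp add: mod_diff_eq)
    then show ?thesis unfolding memF using KN by auto
  qed
  have L: "(LEAST t::nat. 1 \<le> t \<and> ((j + e) mod N, (j + 1 * int t) mod N) \<in> F)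
      = (if 1 \<le> e then 1 else nat (N - K + 1))"
    using least_minus[of e K N] assms KN K3 m by simp
  show ?thesis
  proof (cases "1 \<le> e")
    case True
    then show ?thesis unfolding sR_def cell_def[of j e] using L
      by (auto intro!: cell_eqI simp: mod_add_left_eq)
  next
    case False
    have "int (nat (N - K + 1)) = N - K + 1" using KN by simp
    moreover have "((j + N - K + 1) mod N + (K - 1)) mod N = (j + e) mod N"
      using False assms by (simp add: mod_add_left_eq)
    ultimately show ?thesis unfolding sR_def cell_def[of j e] using L False
      by (auto intro!: cell_eqI simp: algebra_simps)
  qed
qed


lemma sC_plus: assumes "0 \<le> j" "j < N" "0 \<le> e" "e < K"
  shows "sC n F 1 (cell j e) = (if e \<le> K - 2 then cell j (e+1) else cell j 0)"
proof -
  have m: "(((j + e) mod N + int t) mod N, j) \<in> F \<longleftrightarrow> (e + int t) mod N < K" for t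
  proof -
    have "(((j + e) mod N + int t) mod N - j) mod N = (e + int t) mod N"
      by (simp add: mod_diff_left_eq mod_add_left_eq)
    then show ?thesis unfolding memF using KN assms by auto
  qed
  have L: "(LEAST t::nat. 1 \<le> t \<and> (((j + e) mod N + 1 * int t) mod N, j) \<in> F)
      = (if e \<le> K - 2 then 1 else nat (N - K + 1))"
    using least_plus[of e K N] assms KN K3 m by simp
  show ?thesis
  proof (cases "e \<le> K - 2")
    case True
    then show ?thesis unfolding sC_def cell_def[of j e] using L
      by (auto simp: cell_def mod_add_left_eq add.assoc)
  next
    case False
    have "int (nat (N - K + 1)) = N - K + 1" using KN by simp
    moreover have "((j + e) mod N + (N - K + 1)) mod N = j"
    proof -
      have "e = K - 1" using False assms by simp
      then have "j + e + (N - K + 1) = j + 1 * N" by simp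
      then have "(j + e + (N - K + 1)) mod N = (j + 1 * N) mod N" by (rule arg_cong)
      also have "\<dots> = j" using assms by (simp only: mod_mult_self1) simp
      finally have "(j + e + (N - K + 1)) mod N = j" .
      moreover have "((j + e) mod N + (N - K + 1)) mod N = (j + e + (N - K + 1)) mod N"
        by (rule mod_add_left_eq)
      ultimately show ?thesis by simp
    qed
    ultimately show ?thesis unfolding sC_def cell_def[of j e] using L False assms
      by (auto simp: cell_def)
  qed
qed

lemma sC_minus: assumes "0 \<le> j" "j < N" "0 \<le> e" "e < K"
  shows "sC n F (-1) (cell j e) = (if 1 \<le> e then cell j (e-1) else cell j (K-1))"
proof -
  have m: "(((j + e) mod N + -1 * int t) mod N, j) \<in> F \<longleftrightarrow> (e - int t) mod N < K" for t
  proof -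
    have "(((j + e) mod N + -1 * int t) mod N - j) mod N = (e - int t) mod N"
      by (simp add: mod_diff_left_eq mod_add_left_eq)
    then show ?thesis unfolding memF using KN assms by auto
  qed
  have L: "(LEAST t::nat. 1 \<le> t \<and> (((j + e) mod N + -1 * int t) mod N, j) \<in> F)
      = (if 1 \<le> e then 1 else nat (N - K + 1))"
    using least_minus[of e K N] assms KN K3 m by simp
  show ?thesis
  proof (cases "1 \<le> e")
    case True
    then show ?thesis unfolding sC_def cell_def[of j e] using L
      by (auto simp: cell_def mod_add_left_eq mod_diff_left_eq add_diff_eq)
  next
    case False
    have "int (nat (N - K + 1)) = N - K + 1" using KN by simp
    moreover have "((j + e) mod N - (N - K + 1)) mod N = (j + (K - 1)) mod N"
    proof -
      have "e = 0" using False assms by simp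
      then have "j + e - (N - K + 1) = (j + (K - 1)) + (-1) * N" by simp
      then have "(j + e - (N - K + 1)) mod N = ((j + (K - 1)) + (-1) * N) mod N" by (rule arg_cong)
      also have "\<dots> = (j + (K - 1)) mod N" by (simp only: mod_mult_self1)
      finally show ?thesis by (simp add: mod_diff_left_eq)
    qed
    ultimately show ?thesis unfolding sC_def cell_def[of j e] using L False assms
      by (auto simp: cell_def)
  qed
qed


lemma CN_split: "CN n F R C x = (case sR n F (R (fst x)) x of (i', j') \<Rightarrow> sC n F (C j') (i', j'))"
  by (cases x) (simp add: CN_def)

lemma case_cell: "(case cell j e of (i', j') \<Rightarrow> sC n F (Cf j') (i', j')) = sC n F (Cf j) (cell j e)"
  by (simp add: cell_def)

lemma T_gen: assumes "0 \<le> j" "j < N" "0 \<le> e" "e < K"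
  shows "T (cell j e) = (if 1 \<le> e then sC n F (Cf ((j+1) mod N)) (cell ((j+1) mod N) (e-1))
     else sC n F (Cf ((j+N-K+1) mod N)) (cell ((j+N-K+1) mod N) (K-1)))"
  unfolding T_def CN_split using sR_cell[OF assms] case_cell by simp

lemma Cf_in: "0 \<le> x \<Longrightarrow> x \<le> G \<Longrightarrow> Cf x = -1" unfolding Cf_def by simp
lemma Cf_out: "\<not> x \<le> G \<Longrightarrow> Cf x = 1" unfolding Cf_def by simp

lemma T1: assumes "0 \<le> j" "j < N" "1 \<le> e" "e < K" "\<not> (j+1) mod N \<le> G"
  shows "T (cell j e) = cell ((j+1) mod N) e"
proof -
  have "0 \<le> (j+1) mod N" "(j+1) mod N < N" using KN by auto
  then show ?thesis using T_gen[of j e] assms Cf_out sC_plus[of "(j+1) mod N" "e-1"] by simp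
qed

lemma T2: assumes "0 \<le> j" "j < N" "2 \<le> e" "e < K" "(j+1) mod N \<le> G"
  shows "T (cell j e) = cell ((j+1) mod N) (e-2)"
proof -
  have "0 \<le> (j+1) mod N" "(j+1) mod N < N" using KN by auto
  then show ?thesis using T_gen[of j e] assms Cf_in sC_minus[of "(j+1) mod N" "e-1"] by simp
qed

lemma T3: assumes "0 \<le> j" "j < N" "(j+1) mod N \<le> G"
  shows "T (cell j 1) = cell ((j+1) mod N) (K-1)"
proof -
  have "0 \<le> (j+1) mod N" "(j+1) mod N < N" using KN by auto
  then show ?thesis using T_gen[of j 1] assms K3 Cf_in sC_minus[of "(j+1) mod N" 0] by simp
qed

lemma T4: assumes "0 \<le> j" "j < N" "\<not> (j+N-K+1) mod N \<le> G"
  shows "T (cell j 0) = cell ((j+N-K+1) mod N) 0"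
proof -
  have "0 \<le> (j+N-K+1) mod N" "(j+N-K+1) mod N < N" using KN by auto
  then show ?thesis using T_gen[of j 0] assms K3 Cf_out sC_plus[of "(j+N-K+1) mod N" "K-1"] by simp
qed

lemma T5: assumes "0 \<le> j" "j < N" "(j+N-K+1) mod N \<le> G"
  shows "T (cell j 0) = cell ((j+N-K+1) mod N) (K-2)"
proof -
  have "0 \<le> (j+N-K+1) mod N" "(j+N-K+1) mod N < N" using KN by auto
  then show ?thesis using T_gen[of j 0] assms K3 Cf_in sC_minus[of "(j+N-K+1) mod N" "K-1"] by simp
qed


lemma cell_e: assumes "0 \<le> e" "e < K" shows "(fst (cell j e) - snd (cell j e)) mod N = e"
proof -
  have "((j + e) mod N - j) mod N = e mod N" by (simp add: mod_diff_left_eq)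
  also have "\<dots> = e" using assms KN by simp
  finally show ?thesis unfolding cell_def by simp
qed

definition U :: "int \<times> int \<Rightarrow> int \<times> int" where
  "U x = (let j = snd x; e = (fst x - snd x) mod N in
     if \<not> j \<le> G then (if 1 \<le> e then cell (j - 1) e else cell ((j + K - 1) mod N) 0)
     else (if e \<le> K - 3 then cell ((j - 1) mod N) (e + 2)
           else if e = K - 1 then cell ((j - 1) mod N) 1 else cell ((j + K - 1) mod N) 0))"

lemma U_cell: assumes "0 \<le> e" "e < K" shows "U (cell j e) =
     (if \<not> j \<le> G then (if 1 \<le> e then cell (j - 1) e else cell ((j + K - 1) mod N) 0)
     else (if e \<le> K - 3 then cell ((j - 1) mod N) (e + 2)
           else if e = K - 1 then cell ((j - 1) mod N) 1 else cell ((j + K - 1) mod N) 0))"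
  using cell_e[OF assms, of j] unfolding U_def Let_def by (simp add: cell_def)

lemma modN_back1: assumes "0 \<le> j" "j < N" shows "((j + 1) mod N - 1) mod N = j"
proof -
  have "((j + 1) mod N - 1) mod N = (j + 1 - 1) mod N" by (simp add: mod_diff_left_eq)
  then show ?thesis using assms by simp
qed

lemma modN_back2: assumes "0 \<le> j" "j < N" shows "((j + N - K + 1) mod N + K - 1) mod N = j"
proof -
  have "((j + N - K + 1) mod N + K - 1) mod N = ((j + N - K + 1) mod N + (K - 1)) mod N" by (simp only: add_diff_eq)
  also have "\<dots> = (j + N - K + 1 + (K - 1)) mod N" by (rule mod_add_left_eq)
  also have "j + N - K + 1 + (K - 1) = j + 1 * N" by simp
  also have "(j + 1 * N) mod N = j mod N" by (rule mod_mult_self1)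
  finally show ?thesis using assms by simp
qed

lemma T_valid: assumes "0 \<le> j" "j < N" "0 \<le> e" "e < K"
  shows "\<exists>j' e'. T (cell j e) = cell j' e' \<and> 0 \<le> j' \<and> j' < N \<and> 0 \<le> e' \<and> e' < K"
proof -
  have a: "0 \<le> (j+1) mod N" "(j+1) mod N < N" "0 \<le> (j+N-K+1) mod N" "(j+N-K+1) mod N < N"
    using KN by auto
  show ?thesis
  proof (cases "e = 0")
    case True
    then show ?thesis using T4[of j] T5[of j] assms a K3 by (cases "(j+N-K+1) mod N \<le> G") force+
  next
    case False
    show ?thesis
    proof (cases "(j+1) mod N \<le> G")
      case True
      then show ?thesis using T2[of j e] T3[of j] assms a K3 False
        by (cases "e = 1") force+
    next
      case c: False
      then show ?thesis using T1[of j e] assms a False by force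
    qed
  qed
qed

lemma UT: assumes "0 \<le> j" "j < N" "0 \<le> e" "e < K"
  shows "U (T (cell j e)) = cell j e"
proof -
  have a: "0 \<le> (j+1) mod N" "(j+1) mod N < N" "0 \<le> (j+N-K+1) mod N" "(j+N-K+1) mod N < N"
    using KN by auto
  show ?thesis
  proof (cases "e = 0")
    case e0: True
    show ?thesis
    proof (cases "(j+N-K+1) mod N \<le> G")
      case True
      then show ?thesis using T5[of j] U_cell[of "K-2"] e0 assms K3 modN_back2[of j]
        by (simp add: add_diff_eq)
    next
      case False
      then show ?thesis using T4[of j] U_cell[of 0] e0 assms K3 modN_back2[of j]
        by (simp add: add_diff_eq)
    qed
  next
    case False
    show ?thesis
    proof (cases "(j+1) mod N \<le> G")
      case True
      show ?thesis
      proof (cases "e = 1")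
        case e1: True
        then show ?thesis using T3[of j] U_cell[of "K-1"] True assms K3 modN_back1[of j] by simp
      next
        case e1: False
        then show ?thesis using T2[of j e] U_cell[of "e-2"] True False assms K3 modN_back1[of j] by simp
      qed
    next
      case c: False
      have "j + 1 < N"
      proof (rule ccontr)
        assume "\<not> j + 1 < N"
        then have "j + 1 = N" using assms by simp
        then show False using c G_facts by simp
      qed
      then have "(j+1) mod N = j + 1" using assms by simp
      then show ?thesis using T1[of j e] U_cell[of e] c False assms by simp
    qed
  qed
qed

lemma T_into: "x \<in> F \<Longrightarrow> T x \<in> F"
  using F_cell[of x] T_valid cell_in_F by metis

lemma T_inj: "inj_on T F"
proof (rule inj_onI)
  fix x y assume "x \<in> F" "y \<in> F" "T x = T y"
  then show "x = y" using F_cell[of x] F_cell[of y] UT by metis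
qed


lemma finF: "finite F"
proof -
  have "F \<subseteq> {0..<N} \<times> {0..<N}" using memF by auto
  then show ?thesis by (rule finite_subset) auto
qed

lemma bijT: "bij_betw T F F"
proof -
  have sub: "T ` F \<subseteq> F" using T_into by auto
  have "card (T ` F) = card F" using T_inj by (rule card_image)
  then have "T ` F = F" using card_subset_eq[OF finF sub] by simp
  then show ?thesis using T_inj unfolding bij_betw_def by simp
qed

lemma pow_in: "x \<in> F \<Longrightarrow> (T ^^ m) x \<in> F"
  by (induction m) (auto simp: T_into)

lemma pow_cancel: "x \<in> F \<Longrightarrow> y \<in> F \<Longrightarrow> (T ^^ a) x = (T ^^ a) y \<Longrightarrow> x = y"
proof (induction a)
  case 0 then show ?case by simp
next
  case (Suc a)
  have "T ((T ^^ a) x) = T ((T ^^ a) y)" using Suc.prems by simp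
  then have "(T ^^ a) x = (T ^^ a) y" using T_inj pow_in Suc.prems unfolding inj_on_def by blast
  then show ?case using Suc by blast
qed

lemma period: assumes "x \<in> F" shows "\<exists>p. 1 \<le> p \<and> (T ^^ p) x = x"
proof -
  let ?f = "\<lambda>i. (T ^^ i) x"
  have "\<not> inj_on ?f {0..card F}"
  proof
    assume "inj_on ?f {0..card F}"
    moreover have "?f ` {0..card F} \<subseteq> F" using pow_in[OF assms] by blast
    ultimately have "card {0..card F} \<le> card F" using card_inj_on_le finF by blast
    then show False by simp
  qed
  then obtain a b where ab: "a \<noteq> b" "?f a = ?f b" unfolding inj_on_def by blast
  have "\<exists>a b. a < b \<and> ?f a = ?f b"
  proof (cases "a < b")
    case True then show ?thesis using ab by blast
  next
    case False then have "b < a" using ab by simp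
    then show ?thesis using ab by (intro exI[of _ b] exI[of _ a]) simp
  qed
  then obtain a b where ab: "a < b" "?f a = ?f b" by blast
  have "(T ^^ a) ((T ^^ (b - a)) x) = (T ^^ (a + (b - a))) x" by (simp add: funpow_add)
  also have "\<dots> = (T ^^ a) x" using ab by simp
  finally have "(T ^^ a) ((T ^^ (b - a)) x) = (T ^^ a) x" .
  then have "(T ^^ (b - a)) x = x" using pow_cancel pow_in assms by blast
  then show ?thesis using ab by (intro exI[of _ "b - a"]) auto
qed

lemma period_mult: "(T ^^ p) x = x \<Longrightarrow> (T ^^ (p * q)) x = x"
proof (induction q)
  case 0 then show ?case by simp
next
  case (Suc q)
  have "(T ^^ (p * Suc q)) x = (T ^^ p) ((T ^^ (p * q)) x)"
    by (simp add: funpow_add)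
  then show ?case using Suc by simp
qed

definition reach where "reach x y \<longleftrightarrow> (\<exists>m. (T ^^ m) x = y)"

lemma reach_refl: "reach x x" unfolding reach_def by (intro exI[of _ 0]) simp
lemma reach_step: "reach x (T x)" unfolding reach_def by (intro exI[of _ 1]) simp
lemma reach_trans: "reach x y \<Longrightarrow> reach y z \<Longrightarrow> reach x z"
  unfolding reach_def
proof (elim exE)
  fix a b assume "(T ^^ a) x = y" "(T ^^ b) y = z"
  then have "(T ^^ (b + a)) x = z" by (simp add: funpow_add)
  then show "\<exists>m. (T ^^ m) x = z" by blast
qed
lemma reach_pow: "reach x ((T ^^ m) x)" unfolding reach_def by blast

lemma reach_sym: assumes "x \<in> F" "reach x y" shows "reach y x"
proof -
  obtain m where m: "(T ^^ m) x = y" using assms unfolding reach_def by blast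
  obtain p where p: "1 \<le> p" "(T ^^ p) x = x" using period assms by blast
  have pm: "(T ^^ (p * m)) x = x" using period_mult p by blast
  have "m \<le> p * m" using p by simp
  have "(T ^^ (p * m - m)) y = (T ^^ (p * m - m + m)) x"
    using m by (simp add: funpow_add)
  also have "p * m - m + m = p * m" using \<open>m \<le> p * m\<close> by simp
  finally have "(T ^^ (p * m - m)) y = (T ^^ (p * m)) x" .
  then have "(T ^^ (p * m - m)) y = x" using pm by simp
  then show ?thesis unfolding reach_def by blast
qed


lemma Rt: assumes "G \<le> j" "j + int t \<le> N - 1" "1 \<le> e" "e < K"
  shows "(T ^^ t) (cell j e) = cell (j + int t) e"
  using assms(2)
proof (induction t)
  case 0 then show ?case by simp
next
  case (Suc t)
  have IH: "(T ^^ t) (cell j e) = cell (j + int t) e" using Suc by simp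
  have "(j + int t + 1) mod N = j + int t + 1" using Suc.prems assms G_facts by simp
  then have "T (cell (j + int t) e) = cell (j + int t + 1) e"
    using T1[of "j + int t" e] Suc.prems assms G_facts by simp
  moreover have "j + int t + 1 = j + int (Suc t)" by simp
  ultimately show ?case using IH by simp
qed

lemma m1: "(-1) mod K = K - 1"
proof -
  have "(-1) mod K = -1 + 1 * K" by (rule mod_shift) (use K3 in auto)
  then show ?thesis by simp
qed

lemma exitB: assumes "G \<le> j" "j < N" "1 \<le> e" "e < K"
  shows "reach (cell j e) (cell 0 ((e - 2) mod K))"
proof -
  have "(T ^^ nat (N - 1 - j)) (cell j e) = cell (N - 1) e"
    using Rt[of j "nat (N - 1 - j)" e] assms by simp
  then have r1: "reach (cell j e) (cell (N - 1) e)" using reach_pow by metis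
  have N1: "(N - 1 + 1) mod N = 0" by simp
  have "T (cell (N - 1) e) = cell 0 ((e - 2) mod K)"
  proof (cases "e = 1")
    case True
    have "(1 - 2) mod K = K - 1" using m1 by simp
    then show ?thesis using T3[of "N - 1"] True KN G_facts N1 by simp
  next
    case False
    have "(e - 2) mod K = e - 2" using False assms by simp
    then show ?thesis using T2[of "N - 1" e] False assms KN G_facts N1 by simp
  qed
  then show ?thesis using r1 reach_step reach_trans by metis
qed

abbreviation M where "M \<equiv> G + 1"

lemma Bstep: assumes "0 \<le> c" "c \<le> G" "1 \<le> e" "e < K"
  shows "reach (cell c e) (cell ((c + 1) mod M) ((e - 2) mod K))"
proof (cases "c < G")
  case True
  have c1: "(c + 1) mod N = c + 1" "(c + 1) mod M = c + 1" using True assms G_facts by auto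
  have "T (cell c e) = cell ((c + 1) mod M) ((e - 2) mod K)"
  proof (cases "e = 1")
    case e1: True
    have "(1 - 2) mod K = K - 1" using m1 by simp
    then show ?thesis using T3[of c] e1 c1 True assms G_facts by simp
  next
    case False
    have "(e - 2) mod K = e - 2" using False assms by simp
    then show ?thesis using T2[of c e] False c1 True assms G_facts by simp
  qed
  then show ?thesis using reach_step by metis
next
  case False
  then have cG: "c = G" using assms by simp
  have "(G + 1) mod N = G + 1" using G_facts by simp
  then have "T (cell c e) = cell (G + 1) e" using T1[of c e] cG assms G_facts by simp
  moreover have "reach (cell (G + 1) e) (cell 0 ((e - 2) mod K))"
    using exitB[of "G + 1" e] assms G_facts by simp
  moreover have "(c + 1) mod M = 0" using cG by simp
  ultimately show ?thesis using reach_step reach_trans by metis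
qed

lemma Bwalk: assumes "0 \<le> c" "c \<le> G" "0 \<le> e" "e < K"
  shows "(\<forall>s<t. (e - 2 * int s) mod K \<noteq> 0) \<Longrightarrow>
    reach (cell c e) (cell ((c + int t) mod M) ((e - 2 * int t) mod K))"
proof (induction t)
  case 0 then show ?case using assms G_facts reach_refl by simp
next
  case (Suc t)
  let ?c = "(c + int t) mod M" and ?e = "(e - 2 * int t) mod K"
  have r: "reach (cell c e) (cell ?c ?e)" using Suc by simp
  have ne: "?e \<noteq> 0" using Suc.prems by simp
  have h3: "0 \<le> ?c" by (rule pos_mod_sign) (use G_facts in simp)
  have h4: "?c < M" by (rule pos_mod_bound) (use G_facts in simp)
  have h: "0 \<le> ?e" "?e < K" "0 \<le> ?c" "?c < M" using K3 h3 h4 by auto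
  then have "?c \<le> G" "1 \<le> ?e" using ne by linarith+
  then have "reach (cell ?c ?e) (cell ((?c + 1) mod M) ((?e - 2) mod K))"
    using Bstep[of ?c ?e] h by blast
  moreover have "(?c + 1) mod M = (c + int (Suc t)) mod M"
  proof -
    have "(?c + 1) mod M = (c + int t + 1) mod M" by (rule mod_add_left_eq)
    moreover have "c + int t + 1 = c + int (Suc t)" by simp
    ultimately show ?thesis by simp
  qed
  moreover have "(?e - 2) mod K = (e - 2 * int (Suc t)) mod K"
  proof -
    have "(?e - 2) mod K = (e - 2 * int t - 2) mod K" by (rule mod_diff_left_eq)
    moreover have "e - 2 * int t - 2 = e - 2 * int (Suc t)" by simp
    ultimately show ?thesis by simp
  qed
  ultimately have "reach (cell ?c ?e) (cell ((c + int (Suc t)) mod M) ((e - 2 * int (Suc t)) mod K))"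
    by simp
  then show ?case using reach_trans[OF r] by blast
qed

lemma string: assumes "0 \<le> c" "c \<le> G"
  shows "reach (cell c (K - 2)) (cell ((c + K - 1) mod M) 0)"
proof -
  have nz: "(K - 2 - 2 * int s) mod K \<noteq> 0" if "s < k - 1" for s
  proof
    assume "(K - 2 - 2 * int s) mod K = 0"
    then have "K dvd (K - 2 - 2 * int s)" by (simp add: dvd_eq_mod_eq_0)
    moreover have "2 * (int s + 1) = K - (K - 2 - 2 * int s)" by simp
    moreover have "K dvd K - (K - 2 - 2 * int s)" using dvd_diff[OF dvd_refl[of K] calculation(1)] .
    ultimately have d2: "K dvd (2 * (int s + 1))" by (simp add: add.commute)
    have "coprime K 2" using oddk by simp
    then have "K dvd (int s + 1)" using d2 coprime_dvd_mult_right_iff by blast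
    then have "K \<le> int s + 1" by (rule zdvd_imp_le) simp
    then show False using that by simp
  qed
  have "(K - 2 - 2 * int (k - 1)) mod K = 0"
  proof -
    have "K - 2 - 2 * int (k - 1) = (-1) * K" using k3 by simp
    then show ?thesis by simp
  qed
  moreover have "(c + int (k - 1)) mod M = (c + K - 1) mod M" using k3 by (simp add: add_diff_eq)
  moreover have "K - 2 - 2 * int s = K - 2 - 2 * int s" for s by simp
  moreover have "\<forall>s<k - 1. (K - 2 - 2 * int s) mod K \<noteq> 0" using nz by blast
  moreover have "0 \<le> K - 2" "K - 2 < K" using K3 by auto
  ultimately show ?thesis
    using Bwalk[of c "K - 2" "k - 1"] assms by simp
qed

lemma tozero: assumes "0 \<le> c" "c \<le> G" "0 \<le> e" "e < K"
  shows "\<exists>c'. 0 \<le> c' \<and> c' \<le> G \<and> reach (cell c e) (cell c' 0)"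
proof -
  let ?P = "\<lambda>s::nat. (e - 2 * int s) mod K = 0"
  obtain q where q: "k = 2 * q + 1" using oddk by (rule oddE)
  have ex: "?P (nat e * (q + 1))"
  proof -
    have c1: "int (nat e * (q + 1)) = e * (int q + 1)" using assms(3) by (rule nat_mult_aux)
    have c2: "e - 2 * (e * (int q + 1)) = (- e) * K" using q by (rule nat_mult_aux2)
    show ?thesis unfolding c1 c2 by (rule nat_mult_aux3)
  qed
  define t where "t = (LEAST s. ?P s)"
  have P: "?P t" unfolding t_def using ex by (rule LeastI)
  have nz1: "\<not> ?P s" if "s < t" for s using not_less_Least[OF that[unfolded t_def]] .
  have nz: "\<forall>s<t. (e - 2 * int s) mod K \<noteq> 0" using nz1 by blast
  have "reach (cell c e) (cell ((c + int t) mod M) ((e - 2 * int t) mod K))"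
    using Bwalk[OF assms nz] .
  then have r: "reach (cell c e) (cell ((c + int t) mod M) 0)" unfolding P .
  have "0 \<le> (c + int t) mod M" by (rule pos_mod_sign) (use G_facts in simp)
  moreover have "(c + int t) mod M < M" by (rule pos_mod_bound) (use G_facts in simp)
  ultimately show ?thesis using r by (intro exI[of _ "(c + int t) mod M"]) simp
qed


definition wk :: "int \<Rightarrow> nat \<Rightarrow> int" where "wk j s = (j + int s * (N - K + 1)) mod N"

lemma wk_range: "0 \<le> wk j s" "wk j s < N" unfolding wk_def using KN by auto

lemma wk_suc: "(wk j s + N - K + 1) mod N = wk j (Suc s)"
proof -
  have "(wk j s + N - K + 1) mod N = (wk j s + (N - K + 1)) mod N"
    by (rule arg_cong[where f="\<lambda>x. x mod N"]) linarith
  also have "\<dots> = (j + int s * (N - K + 1) + (N - K + 1)) mod N"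
    unfolding wk_def by (rule mod_add_left_eq)
  also have "j + int s * (N - K + 1) + (N - K + 1) = j + int (Suc s) * (N - K + 1)"
    by (simp add: algebra_simps)
  finally show ?thesis unfolding wk_def .
qed

lemma walk0: assumes "0 \<le> j" "j < N"
  shows "(\<forall>s'. 1 \<le> s' \<and> s' \<le> s \<longrightarrow> \<not> wk j s' \<le> G) \<Longrightarrow> (T ^^ s) (cell j 0) = cell (wk j s) 0"
proof (induction s)
  case 0
  have "wk j 0 = j" unfolding wk_def using assms by simp
  then show ?case by simp
next
  case (Suc s)
  have IH: "(T ^^ s) (cell j 0) = cell (wk j s) 0" using Suc by simp
  have "\<not> wk j (Suc s) \<le> G" using Suc.prems by simp
  then have "T (cell (wk j s) 0) = cell (wk j (Suc s)) 0"
    using T4[of "wk j s"] wk_range wk_suc by simp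
  then show ?case using IH by simp
qed

lemma land: assumes "0 \<le> j" "j < N" "1 \<le> s" "wk j s \<le> G"
    "\<forall>s'. 1 \<le> s' \<and> s' < s \<longrightarrow> \<not> wk j s' \<le> G"
  shows "(T ^^ s) (cell j 0) = cell (wk j s) (K - 2)"
proof -
  obtain s0 where s0: "s = Suc s0" using assms(3) by (cases s) auto
  have "\<forall>s'. 1 \<le> s' \<and> s' \<le> s0 \<longrightarrow> \<not> wk j s' \<le> G" using assms(5) s0 by auto
  then have "(T ^^ s0) (cell j 0) = cell (wk j s0) 0" using walk0 assms by blast
  moreover have "T (cell (wk j s0) 0) = cell (wk j s) (K - 2)"
    using T5[of "wk j s0"] wk_range wk_suc s0 assms(4) by simp
  ultimately show ?thesis using s0 by simp
qed

lemma land_least: assumes "0 \<le> j" "j < N" "1 \<le> s" "wk j s \<le> G"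
  defines "sl \<equiv> LEAST s. 1 \<le> s \<and> wk j s \<le> G"
  shows "1 \<le> sl" "wk j sl \<le> G" "sl \<le> s" "reach (cell j 0) (cell (wk j sl) (K - 2))"
proof -
  have ex: "1 \<le> s \<and> wk j s \<le> G" using assms by simp
  have P: "1 \<le> sl \<and> wk j sl \<le> G" unfolding sl_def using ex by (rule LeastI)
  then show "1 \<le> sl" "wk j sl \<le> G" by auto
  show "sl \<le> s" unfolding sl_def using ex by (rule Least_le)
  have nz1: "\<not> (1 \<le> s' \<and> wk j s' \<le> G)" if "s' < sl" for s'
    using not_less_Least[OF that[unfolded sl_def]] .
  have "\<forall>s'. 1 \<le> s' \<and> s' < sl \<longrightarrow> \<not> wk j s' \<le> G" using nz1 by blast
  then have "(T ^^ sl) (cell j 0) = cell (wk j sl) (K - 2)" using land[of j sl] assms P by blast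
  then show "reach (cell j 0) (cell (wk j sl) (K - 2))" using reach_pow by metis
qed

lemma G_gcd: "G = gcd N (K - 1)"
proof -
  have "int (k - 1) = K - 1" using k3 by simp
  then show ?thesis unfolding g_def by (metis gcd_int_int_eq)
qed

lemma G_dvd: "G dvd N" "G dvd (K - 1)" "G dvd (N - K + 1)"
proof -
  show a: "G dvd N" "G dvd (K - 1)" unfolding G_gcd by auto
  have "N - K + 1 = N - (K - 1)" by simp
  then show "G dvd (N - K + 1)" using a by (metis dvd_diff)
qed

lemma wk_solve: assumes "0 \<le> j" "0 \<le> tg" "tg < N" "G dvd (tg - j)"
  shows "\<exists>s. 1 \<le> s \<and> wk j s = tg"
proof -
  obtain u v where uv: "u * (K - 1) + v * N = G" using bezout_int[of "K - 1" N] G_gcd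
    by (metis gcd.commute)
  obtain d where d: "tg - j = G * d" using assms(4) by blast
  define q where "q = (- u * d) div N"
  define s' where "s' = (- u * d) mod N"
  have "q * N + s' = - u * d" unfolding q_def s'_def by (rule div_mult_mod_eq)
  then have s'eq: "s' = - u * d - q * N" by linarith
  have s'pos: "0 \<le> s'" unfolding s'_def using KN by simp
  define s where "s = nat s' + n"
  have si: "int s = s' + N" unfolding s_def using s'pos by simp
  define W where "W = s' + N - d * v + q * (K - 1) - (K - 1)"
  have key: "j + int s * (N - K + 1) = tg + W * N"
    unfolding si W_def using s'eq uv d by algebra
  have "wk j s = (tg + W * N) mod N" unfolding wk_def key ..
  also have "\<dots> = tg" using assms by simp
  finally have "wk j s = tg" .
  moreover have "1 \<le> s" unfolding s_def using kn by simp
  ultimately show ?thesis by blast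
qed


lemma land_gen: assumes "0 \<le> j" "j < N"
  shows "\<exists>L. 0 \<le> L \<and> L \<le> G \<and> reach (cell j 0) (cell L (K - 2))"
proof -
  have g1: "0 \<le> j mod G" "j mod G < G" using G_facts by auto
  have "G dvd (j - j mod G)" by (rule dvd_minus_mod)
  then have "G dvd (j mod G - j)" by (metis dvd_minus_iff minus_diff_eq)
  then obtain s where s: "1 \<le> s" "wk j s = j mod G"
    using wk_solve[of j "j mod G"] assms g1 G_facts by auto
  then have "wk j s \<le> G" using g1 by simp
  then have "reach (cell j 0) (cell (wk j (LEAST s. 1 \<le> s \<and> wk j s \<le> G)) (K - 2))"
    "wk j (LEAST s. 1 \<le> s \<and> wk j s \<le> G) \<le> G"
    using land_least[of j s] assms s by auto
  then show ?thesis using wk_range by blast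
qed

lemma wk_modG: "wk j s mod G = j mod G"
proof -
  have "wk j s mod G = (j + int s * (N - K + 1)) mod G"
    unfolding wk_def using G_dvd(1) by (rule mod_mod_cancel)
  moreover obtain y where "N - K + 1 = G * y" using G_dvd(3) by blast
  moreover have "int s * (G * y) = (int s * y) * G" by simp
  ultimately show ?thesis by (simp only: mod_mult_self1)
qed

lemma land_mid: assumes "1 \<le> c" "c \<le> G - 1"
  shows "reach (cell c 0) (cell c (K - 2))"
proof -
  obtain s where s: "1 \<le> s" "wk c s = c"
    using wk_solve[of c c] assms G_facts by auto
  then have "wk c s \<le> G" using assms by simp
  define sl where "sl = (LEAST s. 1 \<le> s \<and> wk c s \<le> G)"
  have r: "reach (cell c 0) (cell (wk c sl) (K - 2))" "wk c sl \<le> G"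
    using land_least[of c s] assms s G_facts unfolding sl_def by auto
  have m: "wk c sl mod G = c" using wk_modG[of c sl] assms by simp
  have "wk c sl = c"
  proof (cases "wk c sl = G")
    case True
    then show ?thesis using m assms by simp
  next
    case False
    then have "wk c sl < G" using r by simp
    then have "wk c sl mod G = wk c sl" using wk_range by simp
    then show ?thesis using m by simp
  qed
  then show ?thesis using r by simp
qed

lemma land_0: "reach (cell 0 0) (cell G (K - 2))"
proof -
  obtain s where s: "1 \<le> s" "wk 0 s = G"
    using wk_solve[of 0 G] G_facts by auto
  define s0 where "s0 = (LEAST s. 1 \<le> s \<and> wk 0 s = G)"
  have s0P: "1 \<le> s0 \<and> wk 0 s0 = G" unfolding s0_def using s by (intro LeastI) auto
  define sl where "sl = (LEAST s. 1 \<le> s \<and> wk 0 s \<le> G)"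
  have r: "reach (cell 0 0) (cell (wk 0 sl) (K - 2))" "wk 0 sl \<le> G" "sl \<le> s0" "1 \<le> sl"
    using land_least[of 0 s0] s0P G_facts unfolding sl_def by auto
  have m: "wk 0 sl mod G = 0" using wk_modG[of 0 sl] by simp
  have "wk 0 sl = G"
  proof (rule ccontr)
    assume ne: "wk 0 sl \<noteq> G"
    then have "wk 0 sl < G" using r by simp
    then have "wk 0 sl mod G = wk 0 sl" using wk_range by simp
    then have z: "wk 0 sl = 0" using m by simp
    then have "sl \<noteq> s0" using s0P G_facts by auto
    then have lt: "sl < s0" using r by simp
    have "wk 0 (s0 - sl) = (int s0 * (N - K + 1) - int sl * (N - K + 1)) mod N"
      unfolding wk_def using lt by (simp add: of_nat_diff left_diff_distrib)
    also have "\<dots> = ((int s0 * (N - K + 1)) mod N - (int sl * (N - K + 1)) mod N) mod N"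
      by (simp add: mod_diff_eq)
    also have "\<dots> = G"
      using s0P z G_facts unfolding wk_def by simp
    finally have "wk 0 (s0 - sl) = G" .
    then have "1 \<le> s0 - sl \<and> wk 0 (s0 - sl) = G" using lt by simp
    then have "s0 \<le> s0 - sl" unfolding s0_def by (rule Least_le)
    then show False using lt r by simp
  qed
  then show ?thesis using r by simp
qed


abbreviation hub where "hub \<equiv> cell G (K - 2)"

lemma hub_F: "hub \<in> F" using cell_in_F G_facts K3 by simp
lemma Bcell_F: "0 \<le> c \<Longrightarrow> c \<le> G \<Longrightarrow> cell c (K - 2) \<in> F" using cell_in_F G_facts K3 by simp

lemma link_mid: assumes "0 \<le> c" "c \<le> G" "1 \<le> (c + K - 1) mod M" "(c + K - 1) mod M \<le> G - 1"
  shows "reach (cell c (K - 2)) (cell ((c + K - 1) mod M) (K - 2))"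
  using string[OF assms(1,2)] land_mid[OF assms(3,4)] reach_trans by blast

lemma link_0: assumes "0 \<le> c" "c \<le> G" "(c + K - 1) mod M = 0"
  shows "reach (cell c (K - 2)) hub"
  using string[OF assms(1,2)] land_0 assms(3) reach_trans by fastforce

lemma M_even: "even M" using G_facts by simp
lemma K1_even: "even (K - 1)" using oddk by simp

lemma modM_range: "0 \<le> a mod M" "a mod M \<le> G"
proof -
  show "0 \<le> a mod M" by (rule pos_mod_sign) (use G_facts in simp)
  have "a mod M < M" by (rule pos_mod_bound) (use G_facts in simp)
  then show "a mod M \<le> G" by simp
qed

lemma odd_chain: "reach (cell ((G + int j * (K - 1)) mod M) (K - 2)) hub"
proof (induction j)
  case 0
  have "G mod M = G" using G_facts by simp
  then show ?case using reach_refl by simp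
next
  case (Suc j)
  let ?x = "(G + int j * (K - 1)) mod M"
  let ?y = "(G + int (Suc j) * (K - 1)) mod M"
  have y: "(?x + K - 1) mod M = ?y"
  proof -
    have "(?x + K - 1) mod M = (?x + (K - 1)) mod M" by (simp only: add_diff_eq)
    also have "\<dots> = (G + int j * (K - 1) + (K - 1)) mod M" by (rule mod_add_left_eq)
    also have "G + int j * (K - 1) + (K - 1) = G + int (Suc j) * (K - 1)" by (simp add: algebra_simps)
    finally show ?thesis .
  qed
  show ?case
  proof (cases "?y = G")
    case True then show ?thesis using reach_refl by simp
  next
    case False
    have "odd (G + int (Suc j) * (K - 1))" using G_facts K1_even by simp
    then have "odd ?y" using par_mod[OF M_even] by blast
    then have nz: "?y \<noteq> 0" by auto
    have r0: "0 \<le> ?y" "?y \<le> G" by (rule modM_range)+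
    then have "1 \<le> ?y" "?y \<le> G - 1" using nz False by linarith+
    then have "reach (cell ?x (K - 2)) (cell ?y (K - 2))"
      using link_mid[of ?x] modM_range y by simp
    then have "reach (cell ?y (K - 2)) (cell ?x (K - 2))"
      using reach_sym Bcell_F modM_range by blast
    then show ?thesis using Suc reach_trans by blast
  qed
qed

lemma even_chain: "reach (cell ((- int (Suc i) * (K - 1)) mod M) (K - 2)) hub"
proof (induction i)
  case 0
  have "((- (K - 1)) mod M + K - 1) mod M = ((- (K - 1)) mod M + (K - 1)) mod M" by (simp only: add_diff_eq)
  also have "\<dots> = (- (K - 1) + (K - 1)) mod M" by (rule mod_add_left_eq)
  finally have "((- (K - 1)) mod M + K - 1) mod M = 0" by simp
  then show ?case using link_0 modM_range by simp
next
  case (Suc i)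
  let ?x = "(- int (Suc (Suc i)) * (K - 1)) mod M"
  let ?y = "(- int (Suc i) * (K - 1)) mod M"
  have y: "(?x + K - 1) mod M = ?y"
  proof -
    have "(?x + K - 1) mod M = (?x + (K - 1)) mod M" by (simp only: add_diff_eq)
    also have "\<dots> = (- int (Suc (Suc i)) * (K - 1) + (K - 1)) mod M" by (rule mod_add_left_eq)
    also have "- int (Suc (Suc i)) * (K - 1) + (K - 1) = - int (Suc i) * (K - 1)" by (simp add: algebra_simps)
    finally show ?thesis .
  qed
  show ?case
  proof (cases "?y = 0")
    case True
    then show ?thesis using link_0[of ?x] modM_range y by simp
  next
    case False
    have "even (- int (Suc i) * (K - 1))" using K1_even by simp
    then have "even ?y" using par_mod[OF M_even] by blast
    then have nG: "?y \<noteq> G" using G_facts by auto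
    have r0: "0 \<le> ?y" "?y \<le> G" by (rule modM_range)+
    then have "1 \<le> ?y" "?y \<le> G - 1" using nG False by linarith+
    then have "reach (cell ?x (K - 2)) (cell ?y (K - 2))"
      using link_mid[of ?x] modM_range y by simp
    then show ?thesis using Suc reach_trans by blast
  qed
qed

lemma gcd2: "gcd (K - 1) M = 2"
proof -
  have "int (k - 1) = K - 1" using k3 by simp
  moreover have "M = int (g + 1)" by simp
  ultimately have "gcd (K - 1) M = gcd (int (k - 1)) (int (g + 1))" by (simp add: add.commute)
  also have "\<dots> = int (gcd (k - 1) (g + 1))" by (rule gcd_int_int_eq)
  also have "gcd (k - 1) (g + 1) = 2" using gc unfolding g_def by (simp add: gcd.commute)
  finally show ?thesis by simp
qed

lemma allB: assumes "0 \<le> c" "c \<le> G" shows "reach (cell c (K - 2)) hub"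
proof -
  obtain u v where uv: "u * (K - 1) + v * M = 2" using bezout_int[of "K - 1" M] unfolding gcd2 by blast
  show ?thesis
  proof (cases "even c")
    case False
    have "2 dvd (c - G)" using False G_facts by simp
    then obtain j where "(G + int j * (K - 1)) mod M = c"
      using solveM[OF uv, of c G] assms G_facts by auto
    then show ?thesis using odd_chain[of j] by simp
  next
    case True
    have "(- u) * (- (K - 1)) = u * (K - 1)" by (simp only: minus_mult_minus)
    then have uv': "(- u) * (- (K - 1)) + v * M = 2" using uv by linarith
    have "2 dvd (c - 0)" using True by simp
    then obtain j where j: "1 \<le> j" "(0 + int j * (- (K - 1))) mod M = c"
      using solveM[OF uv', of c 0] assms G_facts by auto
    then obtain i where i: "j = Suc i" by (cases j) auto
    have eq: "0 + int j * (- (K - 1)) = - int (Suc i) * (K - 1)" using i by (simp add: algebra_simps)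
    have "(- int (Suc i) * (K - 1)) mod M = c" using j(2) unfolding eq .
    then show ?thesis using even_chain[of i] by simp
  qed
qed

lemma Bstate_hub: assumes "0 \<le> c" "c \<le> G" "0 \<le> e" "e < K"
  shows "reach (cell c e) hub"
proof -
  obtain c' where c': "0 \<le> c'" "c' \<le> G" "reach (cell c e) (cell c' 0)" using tozero[OF assms] by blast
  obtain L where L: "0 \<le> L" "L \<le> G" "reach (cell c' 0) (cell L (K - 2))"
    using land_gen[of c'] c' G_facts by auto
  show ?thesis using c'(3) L(3) allB[OF L(1,2)] reach_trans by blast
qed

lemma all_hub: assumes "x \<in> F" shows "reach x hub"
proof -
  let ?j = "snd x" and ?e = "(fst x - snd x) mod N"
  have x: "x = cell ?j ?e" "0 \<le> ?j" "?j < N" "0 \<le> ?e" "?e < K" using F_cell[OF assms] by auto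
  show ?thesis
  proof (cases "?j \<le> G")
    case True then show ?thesis using Bstate_hub[OF x(2) True x(4) x(5)] x(1) by simp
  next
    case False
    show ?thesis
    proof (cases "?e = 0")
      case True
      obtain L where L: "0 \<le> L" "L \<le> G" "reach (cell ?j 0) (cell L (K - 2))"
        using land_gen[of ?j] x by auto
      have "reach x (cell L (K - 2))" using L(3) x(1) True by simp
      then show ?thesis using allB[OF L(1,2)] reach_trans by blast
    next
      case e: False
      have "reach (cell ?j ?e) (cell 0 ((?e - 2) mod K))" using exitB[of ?j ?e] x False e by simp
      moreover have "reach (cell 0 ((?e - 2) mod K)) hub"
        using Bstate_hub[of 0 "(?e - 2) mod K"] G_facts K3 by simp
      ultimately have "reach (cell ?j ?e) hub" using reach_trans by blast
      then show ?thesis using x(1) by simp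
    qed
  qed
qed

lemma solution: "is_solution n F (\<lambda>_. 1) Cf"
proof -
  have b: "bij_betw (CN n F (\<lambda>_. 1) Cf) F F" using bijT unfolding T_def .
  have r: "\<exists>m. (CN n F (\<lambda>_. 1) Cf ^^ m) x = y" if "x \<in> F" "y \<in> F" for x y
  proof -
    have "reach x hub" "reach hub y" using all_hub that reach_sym hub_F by auto
    then have "reach x y" using reach_trans by blast
    then show ?thesis unfolding reach_def T_def .
  qed
  show ?thesis unfolding is_solution_def using b r by (auto simp: Cf_def)
qed

end

theorem proposition5p1:
  fixes n k :: nat
  assumes "odd n" and "odd k" and "3 \<le> k" and "k < n"
    and "gcd (gcd n (k - 1) + 1) (k - 1) = 2"
  shows "\<exists>R C. is_solution n (cyc_diag n k) R C"
proof -
  interpret cd n k using assms by unfold_locales auto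
  show ?thesis using solution by blast
qed

end
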